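(* Let $G$ be a groupoid that is a generalised inflation of its subgroupoid $U$, and suppose that $G$ is a right modular groupoid and that $U$ has a left identity element $1$ (i.e. $1\cdot u = u$ for all $u \in U$). Then $G$ is an inflation of $U$.
   Context: A groupoid is a set with a binary operation, written $xy$ or $x\cdot y$. A groupoid $G$ is right modular if $xy\cdot z = zy\cdot x$ for all $x,y,z \in G$. A groupoid $G$ is an inflation of its subgroupoid $U$ if $G = \bigcup_{u\in U} G_u$ where (1) $u \in G_u$ for all $u\in U$, (2) $G_u \cap G_v = \emptyset$ for $u \ne v$, and (3) $x \in G_u$, $y\in G_v$ implies $xy = uv$. A groupoid $G$ is a generalised inflation of its subgroupoid $U$ if $G = \bigcup_{u\in U} G_u$ where (1) $u \in G_u$ for all $u \in U$, (2) $G_u\cap G_v=\emptyset$ for $u\neq v$, (3) for every $x \in G$ there are maps $\alpha_x, \beta_x : U \to U$ such that for all $x \in G_u$ and $y \in G_v$ ($u,v\in U$) one has $xy = \alpha_x(v)\cdot \beta_y(u)$ (product computed in $U$), and (4) for $u \in U$, $\alpha_u$ and $\beta_u$ are both the constant map on $U$ with value $u$. *)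

theory Defs
  imports Main
begin

definition groupoid :: "'a set \<Rightarrow> ('a \<Rightarrow> 'a \<Rightarrow> 'a) \<Rightarrow> bool" where
  "groupoid G m \<longleftrightarrow> (\<forall>x\<in>G. \<forall>y\<in>G. m x y \<in> G)"

definition subgroupoid :: "'a set \<Rightarrow> 'a set \<Rightarrow> ('a \<Rightarrow> 'a \<Rightarrow> 'a) \<Rightarrow> bool" where
  "subgroupoid U G m \<longleftrightarrow> groupoid G m \<and> U \<subseteq> G \<and> (\<forall>u\<in>U. \<forall>v\<in>U. m u v \<in> U)"

definition right_modular :: "'a set \<Rightarrow> ('a \<Rightarrow> 'a \<Rightarrow> 'a) \<Rightarrow> bool" where
  "right_modular G m \<longleftrightarrow> (\<forall>x\<in>G. \<forall>y\<in>G. \<forall>z\<in>G. m (m x y) z = m (m z y) x)"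

definition is_left_identity :: "'a set \<Rightarrow> ('a \<Rightarrow> 'a \<Rightarrow> 'a) \<Rightarrow> 'a \<Rightarrow> bool" where
  "is_left_identity U m e \<longleftrightarrow> e \<in> U \<and> (\<forall>u\<in>U. m e u = u)"

definition partition_family :: "'a set \<Rightarrow> 'a set \<Rightarrow> ('a \<Rightarrow> 'a set) \<Rightarrow> bool" where
  "partition_family G U P \<longleftrightarrow>
     G = (\<Union>u\<in>U. P u) \<and>
     (\<forall>u\<in>U. u \<in> P u) \<and>
     (\<forall>u\<in>U. \<forall>v\<in>U. u \<noteq> v \<longrightarrow> P u \<inter> P v = {})"

definition inflation :: "'a set \<Rightarrow> ('a \<Rightarrow> 'a \<Rightarrow> 'a) \<Rightarrow> 'a set \<Rightarrow> bool" where
  "inflation G m U \<longleftrightarrow> subgroupoid U G m \<and>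
     (\<exists>P. partition_family G U P \<and>
        (\<forall>u\<in>U. \<forall>v\<in>U. \<forall>x\<in>P u. \<forall>y\<in>P v. m x y = m u v))"

text \<open>Generalised inflation: alpha x and beta x are maps U -> U (only their values
  on U matter), constant with value u when x = u is in U.\<close>
definition generalised_inflation :: "'a set \<Rightarrow> ('a \<Rightarrow> 'a \<Rightarrow> 'a) \<Rightarrow> 'a set \<Rightarrow> bool" where
  "generalised_inflation G m U \<longleftrightarrow> subgroupoid U G m \<and>
     (\<exists>P \<alpha> \<beta>. partition_family G U P \<and>
        (\<forall>x\<in>G. \<forall>w\<in>U. \<alpha> x w \<in> U \<and> \<beta> x w \<in> U) \<and>
        (\<forall>u\<in>U. \<forall>v\<in>U. \<forall>x\<in>P u. \<forall>y\<in>P v. m x y = m (\<alpha> x v) (\<beta> y u)) \<and>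
        (\<forall>u\<in>U. \<forall>w\<in>U. \<alpha> u w = u \<and> \<beta> u w = u))"

end

theory Submission
  imports Defs
begin

theorem theorem3:
  fixes G U :: "'a set" and m :: "'a \<Rightarrow> 'a \<Rightarrow> 'a" and e :: 'a
  assumes "generalised_inflation G m U"
    and "right_modular G m"
    and "is_left_identity U m e"
  shows "inflation G m U"
proof -
  have sub: "subgroupoid U G m" using assms(1) unfolding generalised_inflation_def by blast
  then have UG: "U \<subseteq> G" and clU: "\<And>u v. u\<in>U \<Longrightarrow> v\<in>U \<Longrightarrow> m u v \<in> U"
    unfolding subgroupoid_def by auto
  have clG: "\<And>x y. x\<in>G \<Longrightarrow> y\<in>G \<Longrightarrow> m x y \<in> G" using sub unfolding subgroupoid_def groupoid_def by blast
  obtain P \<alpha> \<beta> where pf: "partition_family G U P"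
    and ab: "\<forall>x\<in>G. \<forall>w\<in>U. \<alpha> x w \<in> U \<and> \<beta> x w \<in> U"
    and mul: "\<forall>u\<in>U. \<forall>v\<in>U. \<forall>x\<in>P u. \<forall>y\<in>P v. m x y = m (\<alpha> x v) (\<beta> y u)"
    and cst: "\<forall>u\<in>U. \<forall>w\<in>U. \<alpha> u w = u \<and> \<beta> u w = u"
    using assms(1) unfolding generalised_inflation_def by blast
  have eU: "e \<in> U" and le: "\<And>u. u\<in>U \<Longrightarrow> m e u = u" using assms(3) unfolding is_left_identity_def by auto
  have eG: "e \<in> G" using eU UG by blast
  have rm: "\<And>x y z. x\<in>G \<Longrightarrow> y\<in>G \<Longrightarrow> z\<in>G \<Longrightarrow> m (m x y) z = m (m z y) x"
    using assms(2) unfolding right_modular_def by blast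
  have inP: "\<And>x. x\<in>G \<Longrightarrow> \<exists>u\<in>U. x \<in> P u" using pf unfolding partition_family_def by blast
  have selfP: "\<And>u. u\<in>U \<Longrightarrow> u \<in> P u" using pf unfolding partition_family_def by blast
  have prodU: "m x y \<in> U" if hx: "x\<in>G" and hy: "y\<in>G" for x y
  proof -
    obtain u where u: "u\<in>U" "x\<in>P u" using inP hx by blast
    obtain v where v: "v\<in>U" "y\<in>P v" using inP hy by blast
    show ?thesis using mul ab hx hy u v clU by auto
  qed
  have eeU: "m e e = e" using le eU by blast
  have A: "m e x \<in> U" if "x\<in>G" for x using prodU eG that by blast
  have three: "m (m c e) e = m e c" if "c\<in>G" for c
    using rm[OF that eG eG] eeU by simp
  have xe: "m x e = m (m e x) e" if "x\<in>G" for x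
  proof -
    have "m x e \<in> U" using prodU that eG by blast
    then have "m x e = m (m (m x e) e) e" using three[of "m x e"] le UG by auto
    also have "\<dots> = m (m e x) e" using three[OF that] by simp
    finally show ?thesis .
  qed
  have C: "m t x = m t (m e x)" if "t\<in>U" "x\<in>G" for t x
  proof -
    define w where "w = m t e"
    have wU: "w \<in> U" unfolding w_def using clU that eU by blast
    have tw: "m w e = t" unfolding w_def using three[of t] that UG le by auto
    have aU: "m e x \<in> U" using A that by blast
    have "m t x = m (m w e) x" using tw by simp
    also have "\<dots> = m (m x e) w" using rm[of w e x] wU UG eG that by auto
    also have "\<dots> = m (m (m e x) e) w" using xe that by simp
    also have "\<dots> = m (m w e) (m e x)" using rm[of "m e x" e w] aU wU UG eG by auto
    finally show ?thesis using tw by simp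
  qed
  have key: "m x y = m (m e x) (m e y)" if "x\<in>G" "y\<in>G" for x y
  proof -
    have xyU: "m x y \<in> U" using prodU that by blast
    have "m x y = m e (m x y)" using le xyU by simp
    also have "\<dots> = m (m (m x y) e) e" using three[of "m x y"] xyU UG by auto
    also have "\<dots> = m (m (m e y) x) e" using rm[of x y e] that eG by auto
    also have "\<dots> = m (m (m e y) (m e x)) e" using C[of "m e y" x] A that by auto
    also have "\<dots> = m (m e (m e x)) (m e y)" using rm[of "m e y" "m e x" e] A that UG eG by auto
    also have "\<dots> = m (m e x) (m e y)" using le A that by auto
    finally show ?thesis .
  qed
  define Q where "Q w = {x\<in>G. m e x = w}" for w
  have "partition_family G U Q"
    unfolding partition_family_def Q_def using A le UG by auto
  moreover have "\<forall>u\<in>U. \<forall>v\<in>U. \<forall>x\<in>Q u. \<forall>y\<in>Q v. m x y = m u v"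
    unfolding Q_def using key by auto
  ultimately show ?thesis unfolding inflation_def using sub by blast
qed

end
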